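(* Let $\mathcal{H},\mathcal{K}$ be complex Hilbert spaces and $(f_*,f^* ):(\mathsf{P}(\mathcal{H}),\mathsf{L}(\mathcal{H}),\bar e_{\mathcal{H}})\to(\mathsf{P}(\mathcal{K}),\mathsf{L}(\mathcal{K}),\bar e_{\mathcal{K}})$ a Chu morphism. Then $f_*$ is injective if and only if $f^*(f_*([\psi]))=[\psi]$ for every nonzero $\psi\in\mathcal{H}$ (where the ray $f_*([\psi])$ is regarded as an element of $\mathsf{L}(\mathcal{K})$ and $[\psi]$ as an element of $\mathsf{L}(\mathcal{H})$).
   Context: A Chu morphism $(X,A,e)\to(X',A',e')$ between Chu spaces over $[0,1]$ is a pair $(f_*:X\to X',f^*:A'\to A)$ with $e(x,f^*(a'))=e'(f_*(x),a')$ for all $x,a'$. For a complex Hilbert space $\mathcal{H}$: $\mathsf{L}(\mathcal{H})$ is the set of closed subspaces, $P_S$ the orthogonal projector onto $S$, $\mathsf{P}(\mathcal{H})\subseteq\mathsf{L}(\mathcal{H})$ the set of rays $[\psi]=\{\lambda\psi:\lambda\in\mathbb{C}\}$, $\psi\neq0$, and $\bar e_{\mathcal{H}}([\psi],S)=\|P_S\psi\|^2/\|\psi\|^2$. *)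

theory Defs
  imports Complex_Main
begin

text \<open>The inner product is conjugate-linear in the first
and linear in the second argument (physics convention).\<close>

class complex_hilbert = ab_group_add +
  fixes scaleC :: "complex \<Rightarrow> 'a \<Rightarrow> 'a" (infixr "*\<^sub>C" 75)
    and cinner :: "'a \<Rightarrow> 'a \<Rightarrow> complex"
  assumes scaleC_add_right: "a *\<^sub>C (x + y) = a *\<^sub>C x + a *\<^sub>C y"
    and scaleC_add_left: "(a + b) *\<^sub>C x = a *\<^sub>C x + b *\<^sub>C x"
    and scaleC_scaleC: "a *\<^sub>C (b *\<^sub>C x) = (a * b) *\<^sub>C x"
    and scaleC_one: "1 *\<^sub>C x = x"
    and cinner_add_right: "cinner x (y + z) = cinner x y + cinner x z"
    and cinner_scaleC_right: "cinner x (a *\<^sub>C y) = a * cinner x y"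
    and cinner_commute: "cinner y x = cnj (cinner x y)"
    and cinner_self_nonneg: "Im (cinner x x) = 0 \<and> Re (cinner x x) \<ge> 0"
    and cinner_self_eq_0: "cinner x x = 0 \<longleftrightarrow> x = 0"
    and cinner_complete:
      "(\<forall>e::real>0. \<exists>N::nat. \<forall>m\<ge>N. \<forall>n\<ge>N. Re (cinner ((X::nat \<Rightarrow> 'a) m - X n) (X m - X n)) < e) \<Longrightarrow>
       (\<exists>L. \<forall>e::real>0. \<exists>N::nat. \<forall>n\<ge>N. Re (cinner (X n - L) (X n - L)) < e)"

definition cnorm :: "'a::complex_hilbert \<Rightarrow> real" where
  "cnorm x = sqrt (Re (cinner x x))"

definition closed_subspace :: "'a::complex_hilbert set \<Rightarrow> bool" where
  "closed_subspace S \<longleftrightarrow>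
     0 \<in> S \<and> (\<forall>x\<in>S. \<forall>y\<in>S. x + y \<in> S) \<and> (\<forall>a x. x \<in> S \<longrightarrow> a *\<^sub>C x \<in> S) \<and>
     (\<forall>X L. (\<forall>n. X n \<in> S) \<and> ((\<lambda>n. cnorm (X n - L)) \<longlonglongrightarrow> 0) \<longrightarrow> L \<in> S)"

definition Lat :: "'a::complex_hilbert set set" where
  "Lat = {S. closed_subspace S}"

definition ray :: "'a::complex_hilbert \<Rightarrow> 'a set" where
  "ray \<psi> = {c *\<^sub>C \<psi> | c. True}"

definition Rays :: "'a::complex_hilbert set set" where
  "Rays = {ray \<psi> | \<psi>. \<psi> \<noteq> 0}"

definition proj :: "'a::complex_hilbert set \<Rightarrow> 'a \<Rightarrow> 'a" where
  "proj S x = (THE p. p \<in> S \<and> (\<forall>s\<in>S. cinner s (x - p) = 0))"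

text \<open>\<open>ebar([\<psi>], S) = \<parallel>P_S \<psi>\<parallel>^2 / \<parallel>\<psi>\<parallel>^2\<close>, evaluated at a nonzero representative
of the ray (the value does not depend on the representative).\<close>
definition ebar :: "'a::complex_hilbert set \<Rightarrow> 'a set \<Rightarrow> real" where
  "ebar r S = (let \<psi> = (SOME \<psi>. \<psi> \<noteq> 0 \<and> r = ray \<psi>) in
                 (cnorm (proj S \<psi>))\<^sup>2 / (cnorm \<psi>)\<^sup>2)"

definition chu_morphism ::
  "'x set \<Rightarrow> 'a set \<Rightarrow> ('x \<Rightarrow> 'a \<Rightarrow> real) \<Rightarrow>
   'y set \<Rightarrow> 'b set \<Rightarrow> ('y \<Rightarrow> 'b \<Rightarrow> real) \<Rightarrow>
   ('x \<Rightarrow> 'y) \<Rightarrow> ('b \<Rightarrow> 'a) \<Rightarrow> bool" where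
  "chu_morphism X A e X' A' e' fl fu \<longleftrightarrow>
     (\<forall>x\<in>X. fl x \<in> X') \<and> (\<forall>a'\<in>A'. fu a' \<in> A) \<and>
     (\<forall>x\<in>X. \<forall>a'\<in>A'. e x (fu a') = e' (fl x) a')"

end

theory Submission
  imports Defs
begin

lemma scaleC_zero_left[simp]: "(0::complex) *\<^sub>C (x::'a::complex_hilbert) = 0"
proof -
  have "(0::complex) *\<^sub>C x = 0 *\<^sub>C x + 0 *\<^sub>C x" using scaleC_add_left[of 0 0 x] by simp
  thus ?thesis by simp
qed

lemma scaleC_zero_right[simp]: "a *\<^sub>C (0::'a::complex_hilbert) = 0"
proof -
  have "a *\<^sub>C (0::'a) = a *\<^sub>C 0 + a *\<^sub>C 0" using scaleC_add_right[of a 0 0] by simp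
  thus ?thesis by simp
qed

lemma scaleC_minus_right: "a *\<^sub>C (- x) = - (a *\<^sub>C (x::'a::complex_hilbert))"
proof -
  have "a *\<^sub>C x + a *\<^sub>C (- x) = 0" using scaleC_add_right[of a x "-x"] by simp
  thus ?thesis by (simp add: eq_neg_iff_add_eq_0 add.commute)
qed

lemma scaleC_diff_right: "a *\<^sub>C (x - y) = a *\<^sub>C x - a *\<^sub>C (y::'a::complex_hilbert)"
  using scaleC_add_right[of a x "-y"] by (simp add: scaleC_minus_right)

lemma scaleC_minus_left: "(- a) *\<^sub>C x = - (a *\<^sub>C (x::'a::complex_hilbert))"
proof -
  have "a *\<^sub>C x + (-a) *\<^sub>C x = 0" using scaleC_add_left[of a "-a" x] by simp
  thus ?thesis by (simp add: eq_neg_iff_add_eq_0 add.commute)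
qed

lemma scaleC_diff_left: "(a - b) *\<^sub>C x = a *\<^sub>C x - b *\<^sub>C (x::'a::complex_hilbert)"
  using scaleC_add_left[of a "-b" x] by (simp add: scaleC_minus_left)

lemma minus_one_scaleC: "(-1) *\<^sub>C x = - (x::'a::complex_hilbert)"
  by (simp add: scaleC_minus_left scaleC_one)

lemma cinner_zero_right[simp]: "cinner x (0::'a::complex_hilbert) = 0"
  using cinner_add_right[of x 0 0] by simp

lemma cinner_zero_left[simp]: "cinner (0::'a::complex_hilbert) x = 0"
  using cinner_commute[of 0 x] by simp

lemma cinner_minus_right: "cinner x (- y) = - cinner x (y::'a::complex_hilbert)"
  using cinner_add_right[of x y "-y"] by (simp add: eq_neg_iff_add_eq_0 add.commute)

lemma cinner_diff_right: "cinner x (y - z) = cinner x y - cinner x (z::'a::complex_hilbert)"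
  using cinner_add_right[of x y "-z"] by (simp add: cinner_minus_right)

lemma cinner_add_left: "cinner (x + y) z = cinner x z + cinner y (z::'a::complex_hilbert)"
  by (metis cinner_commute cinner_add_right complex_cnj_add)

lemma cinner_scaleC_left: "cinner (a *\<^sub>C x) y = cnj a * cinner x (y::'a::complex_hilbert)"
  by (metis cinner_commute cinner_scaleC_right complex_cnj_mult)

lemma cinner_diff_left: "cinner (x - y) z = cinner x z - cinner y (z::'a::complex_hilbert)"
  by (metis cinner_commute cinner_diff_right complex_cnj_diff)

lemma cinner_self_real: "cinner x x = complex_of_real (Re (cinner x (x::'a::complex_hilbert)))"
  using cinner_self_nonneg[of x] by (simp add: complex_eq_iff)

lemma cinner_self_Re0: "Re (cinner x x) = 0 \<Longrightarrow> x = (0::'a::complex_hilbert)"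
  using cinner_self_real[of x] cinner_self_eq_0[of x] by simp

lemma cinner_self_Re_pos: "x \<noteq> 0 \<Longrightarrow> Re (cinner x x) > 0" for x :: "'a::complex_hilbert"
  using cinner_self_Re0[of x] cinner_self_nonneg[of x] by force

lemma pyth: "cinner u v = 0 \<Longrightarrow> cinner (u+v) (u+v) = cinner u u + cinner v (v::'a::complex_hilbert)"
  using cinner_commute[of u v]
  by (simp add: cinner_add_left cinner_add_right)

lemma cnorm_sq: "(cnorm x)\<^sup>2 = Re (cinner x x)"
  unfolding cnorm_def using cinner_self_nonneg[of x] by simp

lemma subspace_diff: "closed_subspace S \<Longrightarrow> x \<in> S \<Longrightarrow> y \<in> S \<Longrightarrow> x - y \<in> S"
  unfolding closed_subspace_def
  by (metis minus_one_scaleC diff_conv_add_uminus)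

lemma proj_unique:
  assumes S: "closed_subspace S" and p: "p \<in> S" and o: "\<forall>s\<in>S. cinner s (x - p) = 0"
  shows "proj S x = p"
  unfolding proj_def
proof (rule the_equality)
  show "p \<in> S \<and> (\<forall>s\<in>S. cinner s (x - p) = 0)" using p o by simp
next
  fix q assume q: "q \<in> S \<and> (\<forall>s\<in>S. cinner s (x - q) = 0)"
  have d: "q - p \<in> S" using subspace_diff[OF S] q p by simp
  have "cinner (q - p) (x - p) = 0" using o d by simp
  moreover have "cinner (q - p) (x - q) = 0" using q d by simp
  ultimately have "cinner (q - p) ((x - p) - (x - q)) = 0" by (simp add: cinner_diff_right)
  hence "cinner (q - p) (q - p) = 0" by simp
  thus "q = p" using cinner_self_eq_0[of "q - p"] by simp
qed

lemma ray_mem[simp]: "c *\<^sub>C \<psi> \<in> ray \<psi>" unfolding ray_def by blast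

lemma ray_self: "\<psi> \<in> ray \<psi>" using ray_mem[of 1 \<psi>] by (simp add: scaleC_one)

lemma ray_eq:
  assumes "x \<in> ray \<psi>" "x \<noteq> 0"
  shows "ray x = ray (\<psi>::'a::complex_hilbert)"
proof -
  obtain c where c: "x = c *\<^sub>C \<psi>" using assms(1) unfolding ray_def by blast
  have c0: "c \<noteq> 0" using c assms(2) by auto
  have "\<psi> = inverse c *\<^sub>C x" using c c0 by (simp add: scaleC_scaleC scaleC_one)
  show ?thesis
  proof
    show "ray x \<subseteq> ray \<psi>" unfolding ray_def using c by (auto simp: scaleC_scaleC)
    show "ray \<psi> \<subseteq> ray x" unfolding ray_def using \<open>\<psi> = _\<close>
      by (auto simp: scaleC_scaleC)
  qed
qed

lemma subspace_ray: "closed_subspace T \<Longrightarrow> x \<in> T \<Longrightarrow> ray x \<subseteq> T"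
  unfolding closed_subspace_def ray_def by auto

lemma ray_closed: "closed_subspace (ray (\<psi>::'a::complex_hilbert))"
  unfolding closed_subspace_def
proof (intro conjI allI impI ballI)
  show "0 \<in> ray \<psi>" using ray_mem[of 0 \<psi>] by simp
next
  fix x y assume "x \<in> ray \<psi>" "y \<in> ray \<psi>"
  then obtain a b where "x = a *\<^sub>C \<psi>" "y = b *\<^sub>C \<psi>" unfolding ray_def by blast
  thus "x + y \<in> ray \<psi>" by (metis ray_mem scaleC_add_left)
next
  fix a x assume "x \<in> ray \<psi>"
  then obtain b where "x = b *\<^sub>C \<psi>" unfolding ray_def by blast
  thus "a *\<^sub>C x \<in> ray \<psi>" by (simp add: scaleC_scaleC)
next
  fix X L assume h: "(\<forall>n. X n \<in> ray \<psi>) \<and> (\<lambda>n. cnorm (X n - L)) \<longlonglongrightarrow> 0"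
  have "\<forall>n. \<exists>c. X n = c *\<^sub>C \<psi>" using h unfolding ray_def by blast
  then obtain c where c: "\<And>n. X n = c n *\<^sub>C \<psi>" by metis
  define a where "a = cinner \<psi> L / cinner \<psi> \<psi>"
  define w where "w = L - a *\<^sub>C \<psi>"
  have o: "cinner \<psi> w = 0"
  proof (cases "\<psi> = 0")
    case True thus ?thesis by simp
  next
    case False
    hence "cinner \<psi> \<psi> \<noteq> 0" using cinner_self_eq_0[of \<psi>] by simp
    thus ?thesis unfolding w_def a_def by (simp add: cinner_diff_right cinner_scaleC_right)
  qed
  have ge: "cnorm w \<le> cnorm (X n - L)" for n
  proof -
    have e: "X n - L = (c n - a) *\<^sub>C \<psi> + (- w)"
      unfolding c w_def by (simp add: scaleC_diff_left)
    have "cinner ((c n - a) *\<^sub>C \<psi>) (- w) = 0"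
      by (simp add: cinner_scaleC_left cinner_minus_right o)
    hence "cinner (X n - L) (X n - L) = cinner ((c n - a) *\<^sub>C \<psi>) ((c n - a) *\<^sub>C \<psi>) + cinner (-w) (-w)"
      unfolding e by (rule pyth)
    moreover have "cinner (-w) (-w) = cinner w w"
      by (simp add: cinner_minus_right) (metis cinner_commute cinner_minus_right complex_cnj_minus minus_minus)
    ultimately have "Re (cinner (X n - L) (X n - L)) \<ge> Re (cinner w w)"
      using cinner_self_nonneg[of "(c n - a) *\<^sub>C \<psi>"] by simp
    thus ?thesis unfolding cnorm_def by simp
  qed
  have "cnorm w \<le> 0"
    using h by (intro LIMSEQ_le_const[of "\<lambda>n. cnorm (X n - L)"]) (auto intro: ge)
  hence "Re (cinner w w) = 0" unfolding cnorm_def using cinner_self_nonneg[of w] by simp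
  hence "w = 0" by (rule cinner_self_Re0)
  hence "L = a *\<^sub>C \<psi>" unfolding w_def by simp
  thus "L \<in> ray \<psi>" by simp
qed

lemma rep:
  assumes "r \<in> Rays"
  obtains \<phi> where "\<phi> = (SOME \<psi>. \<psi> \<noteq> 0 \<and> r = ray \<psi>)" "\<phi> \<noteq> 0" "r = ray \<phi>"
proof -
  have "\<exists>\<psi>. \<psi> \<noteq> 0 \<and> r = ray \<psi>" using assms unfolding Rays_def by blast
  from someI_ex[OF this] show ?thesis using that by blast
qed

lemma ebar_sub:
  assumes r: "r \<in> Rays" and S: "closed_subspace S" and sub: "r \<subseteq> S"
  shows "ebar r S = 1"
proof -
  obtain \<phi> where p: "\<phi> = (SOME \<psi>. \<psi> \<noteq> 0 \<and> r = ray \<psi>)" "\<phi> \<noteq> 0" "r = ray \<phi>"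
    using rep[OF r] by blast
  have "\<phi> \<in> S" using sub p(3) ray_self by blast
  hence "proj S \<phi> = \<phi>" by (intro proj_unique[OF S]) auto
  moreover have "(cnorm \<phi>)\<^sup>2 \<noteq> 0" using cnorm_sq[of \<phi>] cinner_self_Re_pos[OF p(2)] by linarith
  ultimately show ?thesis unfolding ebar_def Let_def p(1)[symmetric] by simp
qed

lemma ebar_zero:
  assumes r: "r \<in> Rays"
  shows "ebar r {0::'a::complex_hilbert} = 0"
proof -
  have "ray (0::'a) = {0}" unfolding ray_def by auto
  hence S: "closed_subspace {0::'a}" using ray_closed[of "0::'a"] by simp
  obtain \<phi> where p: "\<phi> = (SOME \<psi>. \<psi> \<noteq> 0 \<and> r = ray \<psi>)" "\<phi> \<noteq> 0" "r = ray \<phi>"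
    using rep[OF r] by blast
  have "proj {0} \<phi> = 0" by (intro proj_unique[OF S]) auto
  thus ?thesis unfolding ebar_def Let_def p(1)[symmetric] by (simp add: cnorm_def)
qed

lemma ebar_ray_one:
  assumes s: "s \<in> Rays" and r: "r \<in> Rays" and e: "ebar s r = 1"
  shows "s = (r::'a::complex_hilbert set)"
proof -
  obtain \<phi> where p: "\<phi> = (SOME \<psi>. \<psi> \<noteq> 0 \<and> s = ray \<psi>)" "\<phi> \<noteq> 0" "s = ray \<phi>"
    using rep[OF s] by blast
  obtain \<chi> where ch: "\<chi> \<noteq> 0" "r = ray \<chi>" using r unfolding Rays_def by blast
  define a where "a = cinner \<chi> \<phi> / cinner \<chi> \<chi>"
  define q where "q = a *\<^sub>C \<chi>"
  have cc: "cinner \<chi> \<chi> \<noteq> 0" using ch cinner_self_eq_0[of \<chi>] by simp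
  have o: "cinner \<chi> (\<phi> - q) = 0"
    unfolding q_def a_def using cc by (simp add: cinner_diff_right cinner_scaleC_right)
  have pq: "proj r \<phi> = q"
  proof (rule proj_unique)
    show "closed_subspace r" using ch ray_closed by simp
    show "q \<in> r" using ch q_def by simp
    show "\<forall>s\<in>r. cinner s (\<phi> - q) = 0"
      using ch o unfolding ray_def by (auto simp: cinner_scaleC_left)
  qed
  have o2: "cinner q (\<phi> - q) = 0" using o by (simp add: q_def cinner_scaleC_left)
  have "cinner \<phi> \<phi> = cinner q q + cinner (\<phi> - q) (\<phi> - q)"
    using pyth[OF o2] by simp
  moreover have pos: "Re (cinner \<phi> \<phi>) > 0" using cinner_self_Re_pos[OF p(2)] .
  moreover have "Re (cinner q q) / Re (cinner \<phi> \<phi>) = 1"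
    using e unfolding ebar_def Let_def p(1)[symmetric] pq cnorm_sq .
  ultimately have "Re (cinner (\<phi> - q) (\<phi> - q)) = 0" by simp
  hence "\<phi> - q = 0" by (rule cinner_self_Re0)
  hence "\<phi> \<in> ray \<chi>" unfolding q_def by simp
  thus ?thesis using ray_eq p ch by metis
qed

lemma RL: "r \<in> Rays \<Longrightarrow> r \<in> Lat"
  unfolding Rays_def Lat_def using ray_closed by blast

theorem proposition3p5:
  fixes fl :: "'h::complex_hilbert set \<Rightarrow> 'k::complex_hilbert set"
    and fu :: "'k set \<Rightarrow> 'h set"
  assumes "chu_morphism (Rays :: 'h set set) (Lat :: 'h set set) ebar
                        (Rays :: 'k set set) (Lat :: 'k set set) ebar fl fu"
  shows "inj_on fl (Rays :: 'h set set) \<longleftrightarrow>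
         (\<forall>\<psi>::'h. \<psi> \<noteq> 0 \<longrightarrow> fu (fl (ray \<psi>)) = ray \<psi>)"
proof
  assume inj: "inj_on fl (Rays :: 'h set set)"
  have m1: "\<And>x. x \<in> (Rays::'h set set) \<Longrightarrow> fl x \<in> (Rays::'k set set)"
    and m2: "\<And>a. a \<in> (Lat::'k set set) \<Longrightarrow> fu a \<in> (Lat::'h set set)"
    and m3: "\<And>x a. x \<in> (Rays::'h set set) \<Longrightarrow> a \<in> (Lat::'k set set) \<Longrightarrow> ebar x (fu a) = ebar (fl x) a"
    using assms unfolding chu_morphism_def by auto
  show "\<forall>\<psi>::'h. \<psi> \<noteq> 0 \<longrightarrow> fu (fl (ray \<psi>)) = ray \<psi>"
  proof (intro allI impI)
    fix \<psi> :: 'h assume \<psi>: "\<psi> \<noteq> 0"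
    define r where "r = ray \<psi>"
    have r: "r \<in> Rays" unfolding r_def Rays_def using \<psi> by blast
    have flr: "fl r \<in> Rays" using m1 r by simp
    hence flrL: "fl r \<in> Lat" by (rule RL)
    define T where "T = fu (fl r)"
    have T: "closed_subspace T" using m2[OF flrL] unfolding T_def Lat_def by simp
    have e1: "ebar r T = 1" unfolding T_def using m3[OF r flrL]
      ebar_sub[OF flr] flrL unfolding Lat_def by simp
    have key: "\<And>s. s \<in> Rays \<Longrightarrow> s \<subseteq> T \<Longrightarrow> s = r"
    proof -
      fix s :: "'h set" assume s: "s \<in> Rays" "s \<subseteq> T"
      have "ebar s T = 1" using ebar_sub[OF s(1) T s(2)] .
      hence "ebar (fl s) (fl r) = 1" using m3[OF s(1) flrL] unfolding T_def by simp
      hence "fl s = fl r" using ebar_ray_one m1[OF s(1)] flr by blast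
      thus "s = r" using inj s(1) r by (meson inj_onD)
    qed
    have "T \<noteq> {0}" using e1 ebar_zero[OF r] by auto
    moreover have "0 \<in> T" using T unfolding closed_subspace_def by simp
    ultimately obtain x where x: "x \<in> T" "x \<noteq> 0" by blast
    have rx: "ray x \<in> Rays" unfolding Rays_def using x by blast
    have "ray x = r" using key[OF rx subspace_ray[OF T x(1)]] .
    hence sub1: "r \<subseteq> T" using subspace_ray[OF T x(1)] by simp
    have sub2: "T \<subseteq> r"
    proof
      fix y assume y: "y \<in> T"
      show "y \<in> r"
      proof (cases "y = 0")
        case True thus ?thesis unfolding r_def using ray_mem[of 0 \<psi>] by simp
      next
        case False
        hence "ray y \<in> Rays" unfolding Rays_def by blast
        hence "ray y = r" using key subspace_ray[OF T y] by blast
        thus ?thesis using ray_self by metis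
      qed
    qed
    show "fu (fl (ray \<psi>)) = ray \<psi>" using sub1 sub2 unfolding T_def r_def by blast
  qed
next
  assume h: "\<forall>\<psi>::'h. \<psi> \<noteq> 0 \<longrightarrow> fu (fl (ray \<psi>)) = ray \<psi>"
  show "inj_on fl (Rays :: 'h set set)"
  proof (rule inj_onI)
    fix x y :: "'h set" assume a: "x \<in> Rays" "y \<in> Rays" "fl x = fl y"
    obtain u v where "u \<noteq> 0" "x = ray u" "v \<noteq> 0" "y = ray v" using a unfolding Rays_def by blast
    thus "x = y" using h a(3) by metis
  qed
qed

end
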